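(* Let $G=(V,E)$ be a finite graph of maximum degree $\Delta$ with no isolated vertices and adjacency matrix $A$. Let $b\in\{0\}\cup[1,\infty)$, $c(0)=0.109597$, $c(b)=0.0896883/b$ for $b\ge1$, and $0<\lambda<c(b)/\Delta$. Define, for $u\in V$, $D_u=d_u(1+\lambda)^b\log(1+\lambda)$, $\beta_u=\frac{1+\lambda}{\lambda}\frac{D_u}{W(D_u)(1+W(D_u))}$, $\gamma_u=\frac{1+\lambda}{\lambda}\frac{D_u}{d_u(1+W(D_u))}$, and $B=\mathrm{diag}(\boldsymbol\beta)$, $\Gamma=\mathrm{diag}(\boldsymbol\gamma)$. Then every $\mathbf x\in\mathbb R^V$ with $\mathbf x\ge\mathbf 0$ and $(B+\Gamma A)\mathbf x\ge\mathbf 1$ satisfies \[ \sum_{u\in V}x_u\ \ge\ \sum_{u\in V}\frac{1}{\beta_u+d_u\gamma_u}. \]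
   Context: $d_u$ denotes the degree of $u$; $W:(0,\infty)\to(0,\infty)$ is the principal branch of the Lambert $W$-function (inverse of $x\mapsto xe^x$). Vector inequalities are entrywise. *)

theory Defs
  imports "HOL-Analysis.Analysis"
begin

definition lambertW :: "real \<Rightarrow> real" where
  "lambertW y = (THE w. w > 0 \<and> w * exp w = y)"

definition simple_graph :: "'a set \<Rightarrow> ('a \<Rightarrow> 'a \<Rightarrow> bool) \<Rightarrow> bool" where
  "simple_graph V E \<longleftrightarrow> finite V \<and> (\<forall>u v. E u v \<longrightarrow> u \<in> V \<and> v \<in> V)
     \<and> (\<forall>u v. E u v \<longrightarrow> E v u) \<and> (\<forall>u. \<not> E u u)"

definition degree :: "'a set \<Rightarrow> ('a \<Rightarrow> 'a \<Rightarrow> bool) \<Rightarrow> 'a \<Rightarrow> nat" where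
  "degree V E u = card {v \<in> V. E u v}"

definition max_degree :: "'a set \<Rightarrow> ('a \<Rightarrow> 'a \<Rightarrow> bool) \<Rightarrow> nat" where
  "max_degree V E = Max (degree V E ` V)"

definition adj :: "('a \<Rightarrow> 'a \<Rightarrow> bool) \<Rightarrow> 'a \<Rightarrow> 'a \<Rightarrow> real" where
  "adj E u v = (if E u v then 1 else 0)"

definition cconst :: "real \<Rightarrow> real" where
  "cconst b = (if b = 0 then 0.109597 else 0.0896883 / b)"

definition Dval :: "real \<Rightarrow> real \<Rightarrow> nat \<Rightarrow> real" where
  "Dval b lam d = real d * (1 + lam) powr b * ln (1 + lam)"

definition betaval :: "real \<Rightarrow> real \<Rightarrow> nat \<Rightarrow> real" where
  "betaval b lam d = (1 + lam) / lam *
     (Dval b lam d / (lambertW (Dval b lam d) * (1 + lambertW (Dval b lam d))))"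

definition gammaval :: "real \<Rightarrow> real \<Rightarrow> nat \<Rightarrow> real" where
  "gammaval b lam d = (1 + lam) / lam *
     (Dval b lam d / (real d * (1 + lambertW (Dval b lam d))))"

end

theory Submission
  imports Defs
begin


lemma lambertW_props:
  fixes y :: real assumes y: "0 < y"
  shows "0 < lambertW y \<and> lambertW y * exp (lambertW y) = y"
proof -
  have ex: "\<exists>w\<ge>0. w \<le> y \<and> w * exp w = y"
  proof (rule IVT)
    show "0 * exp 0 \<le> y" using y by simp
    show "y \<le> y * exp y" using y by simp
    show "0 \<le> y" using y by simp
    show "\<forall>x. 0 \<le> x \<and> x \<le> y \<longrightarrow> isCont (\<lambda>w. w * exp w) x" by (auto intro!: continuous_intros)
  qed
  then obtain w where w: "0 \<le> w" "w * exp w = y" by blast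
  have wpos: "0 < w" using w y by (cases "w = 0") auto
  have uniq: "z = w" if "0 < z" "z * exp z = y" for z
  proof (rule ccontr)
    assume "z \<noteq> w"
    then consider "z < w" | "w < z" by linarith
    then show False
    proof cases
      case 1
      then have "z * exp z < w * exp w"
        using that(1) by (intro mult_strict_mono) auto
      then show False using that w by simp
    next
      case 2
      then have "w * exp w < z * exp z"
        using wpos by (intro mult_strict_mono) auto
      then show False using that w by simp
    qed
  qed
  have "(THE w. w > 0 \<and> w * exp w = y) = w"
  proof (rule the_equality)
    show "w > 0 \<and> w * exp w = y" using wpos w by simp
    show "\<And>z. z > 0 \<and> z * exp z = y \<Longrightarrow> z = w" using uniq by blast
  qed
  then show ?thesis unfolding lambertW_def using wpos w by simp
qed



lemma pair_dir:
  fixes p q :: real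
  assumes p0: "0 \<le> p" and pq: "p \<le> q" and q4: "q \<le> 1/4"
  defines "A \<equiv> exp (-p) - exp (-q)" and "B \<equiv> exp (-p)/(1+p) - exp (-q)/(1+q)"
  shows "A \<ge> 0 \<and> 2 * B \<ge> A \<and> B \<le> 4 * A"
proof -
  define x where "x = q - p"
  have x0: "0 \<le> x" and x4: "x \<le> 1/4" using pq p0 q4 by (auto simp: x_def)
  have eq: "exp (-q) = exp (-p) * exp (-x)" by (simp add: x_def flip: exp_add)
  have e1: "exp (-x) \<le> 1/(1+x)"
  proof -
    have "1 + x \<le> exp x" by (rule exp_ge_add_one_self)
    then have "1/exp x \<le> 1/(1+x)" using x0 by (intro divide_left_mono) auto
    then show ?thesis by (simp add: exp_minus field_simps)
  qed
  have e2: "1 - x \<le> exp (-x)" using exp_ge_add_one_self[of "-x"] by simp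
  have e3: "1 - p \<le> exp (-p)" using exp_ge_add_one_self[of "-p"] by simp
  have e4: "exp (-p) \<le> 1" using p0 by simp
  have ep0: "0 < exp (-p)" by simp
  have Aeq: "A = exp (-p) * (1 - exp (-x))" unfolding A_def eq by (simp add: algebra_simps)
  have Beq: "B = exp (-p) * (1/(1+p) - exp (-x)/(1+q))" unfolding B_def eq
    using p0 q4 pq by (simp add: field_simps)
  have ex1: "exp (-x) \<le> 1" using x0 by simp
  have A_le: "A \<le> x"
  proof -
    have "exp (-p) * (1 - exp (-x)) \<le> 1 - exp (-x)"
      using mult_right_mono[of "exp (-p)" 1 "1 - exp (-x)"] e4 ex1 by simp
    then show ?thesis using Aeq e2 by linarith
  qed
  have A_ge: "A \<ge> 3/5 * x"
  proof -
    have "1 - exp (-x) \<ge> x/(1+x)"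
      using e1 x0 by (simp add: field_simps)
    moreover have "x/(1+x) \<ge> 4/5 * x"
    proof -
      have "x*(4*x) \<le> x*1" using x0 x4 by (intro mult_left_mono) auto
      then show ?thesis using x0 by (simp add: field_simps)
    qed
    ultimately have h1: "1 - exp (-x) \<ge> 4/5 * x" by linarith
    have "exp (-p) * (1 - exp (-x)) \<ge> 3/4 * (4/5 * x)"
      using e3 h1 p0 q4 pq x0 by (intro mult_mono) auto
    then show ?thesis using Aeq by simp
  qed
  have br_ge: "1/(1+p) - exp (-x)/(1+q) \<ge> x"
  proof -
    have "exp (-x)/(1+q) \<le> (1/(1+x))/(1+q)"
      using e1 p0 pq by (intro divide_right_mono) auto
    moreover have "1/(1+p) - (1/(1+x))/(1+q) = x*(2+q)/((1+p)*(1+x)*(1+q))"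
    proof -
      have nz: "1+p \<noteq> 0" "1+x \<noteq> 0" "1+q \<noteq> 0" using p0 pq x0 by auto
      have "1/(1+p) - (1/(1+x))/(1+q) = ((1+x)*(1+q) - (1+p))/((1+p)*((1+x)*(1+q)))"
        using nz by (simp add: diff_frac_eq)
      also have "(1+x)*(1+q) - (1+p) = x*(2+q)" by (simp add: x_def algebra_simps)
      finally show ?thesis by (simp add: mult.assoc)
    qed
    moreover have "x*(2+q)/((1+p)*(1+x)*(1+q)) \<ge> x"
    proof -
      have "(1+p)*(1+x)*(1+q) \<le> (5/4)*(5/4)*(5/4)"
        using p0 pq q4 x0 x4 by (intro mult_mono) auto
      then have "(1+p)*(1+x)*(1+q) \<le> 2+q" using p0 pq by linarith
      then have "x*((1+p)*(1+x)*(1+q)) \<le> x*(2+q)" using x0 by (intro mult_left_mono) auto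
      moreover have "0 < (1+p)*(1+x)*(1+q)" using p0 pq x0 by simp
      ultimately show ?thesis by (simp add: pos_le_divide_eq mult.commute)
    qed
    ultimately show ?thesis by linarith
  qed
  have br_le: "1/(1+p) - exp (-x)/(1+q) \<le> 2 * x"
  proof -
    have "(1-x)/(1+q) \<le> exp (-x)/(1+q)"
      using e2 p0 pq by (intro divide_right_mono) auto
    moreover have "1/(1+p) - (1-x)/(1+q) = x*(2+p)/((1+p)*(1+q))"
    proof -
      have nz: "1+p \<noteq> 0" "1+x \<noteq> 0" "1+q \<noteq> 0" using p0 pq x0 by auto
      have "1/(1+p) - (1-x)/(1+q) = ((1+q) - (1+p)*(1-x))/((1+p)*(1+q))"
        using nz by (simp add: diff_frac_eq)
      also have "(1+q) - (1+p)*(1-x) = x*(2+p)" by (simp add: x_def algebra_simps)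
      finally show ?thesis .
    qed
    moreover have "x*(2+p)/((1+p)*(1+q)) \<le> 2*x"
    proof -
      have "2+p \<le> 2*((1+p)*(1+q))" using p0 pq by (simp add: algebra_simps)
      then have "x*(2+p) \<le> x*(2*((1+p)*(1+q)))" using x0 by (intro mult_left_mono) auto
      moreover have "0 < (1+p)*(1+q)" using p0 pq by simp
      ultimately show ?thesis by (simp add: pos_divide_le_eq mult.commute mult.left_commute)
    qed
    ultimately show ?thesis by linarith
  qed
  have B_ge: "B \<ge> 3/4 * x"
  proof -
    have "exp (-p) * (1/(1+p) - exp (-x)/(1+q)) \<ge> 3/4 * x"
      using e3 br_ge p0 q4 pq x0 by (intro mult_mono) auto
    then show ?thesis using Beq by simp
  qed
  have B_le: "B \<le> 2 * x"
  proof -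
    have "exp (-p) * (1/(1+p) - exp (-x)/(1+q)) \<le> 1 * (1/(1+p) - exp (-x)/(1+q))"
      using e4 br_ge x0 by (intro mult_right_mono) auto
    then show ?thesis using Beq br_le by simp
  qed
  show ?thesis using A_le A_ge B_ge B_le x0 by auto
qed

lemma pair_ineq:
  fixes p q :: real
  assumes "0 \<le> p" "p \<le> 1/4" "0 \<le> q" "q \<le> 1/4"
  shows "(2*(exp (-p) - exp (-q)) - (exp (-p)/(1+p) - exp (-q)/(1+q)))^2 / 8
     \<le> (exp (-p) - exp (-q)) * (exp (-p)/(1+p) - exp (-q)/(1+q))"
proof -
  have main: "(2*A - B)^2/8 \<le> A*B" if "A \<ge> 0" "2*B \<ge> A" "B \<le> 4*A" for A B :: real
  proof -
    have f1: "0 \<le> (2*B - A) * (4*A - B)" using that by (intro mult_nonneg_nonneg) auto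
    have f2: "0 \<le> A*B" using that by (intro mult_nonneg_nonneg) auto
    have f3: "0 \<le> B*B" by simp
    have e1: "(2*A-B)^2 = 4*(A*A) - 4*(A*B) + B*B" by (simp add: power2_eq_square algebra_simps)
    have e2: "(2*B - A) * (4*A - B) = 9*(A*B) - 2*(B*B) - 4*(A*A)" by (simp add: algebra_simps)
    have "(2*A-B)^2 \<le> 8*(A*B)" using f1 f2 f3 e1 e2 by linarith
    then show ?thesis by simp
  qed
  have neg: "(2*A - B)^2/8 \<le> A*B" if "(2*(-A) - (-B))^2/8 \<le> (-A)*(-B)" for A B :: real
  proof -
    have "(2*(-A) - (-B))^2 = (2*A - B)^2" by (simp add: power2_eq_square algebra_simps)
    then show ?thesis using that by simp
  qed
  show ?thesis
  proof (cases "p \<le> q")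
    case True
    then show ?thesis using pair_dir[of p q] main assms by blast
  next
    case False
    then have "q \<le> p" by simp
    then have h: "exp (-q) - exp (-p) \<ge> 0 \<and> 2 * (exp (-q)/(1+q) - exp (-p)/(1+p)) \<ge> exp (-q) - exp (-p)
       \<and> exp (-q)/(1+q) - exp (-p)/(1+p) \<le> 4 * (exp (-q) - exp (-p))"
      using pair_dir[of q p] assms by blast
    have "(2*(exp (-q) - exp (-p)) - (exp (-q)/(1+q) - exp (-p)/(1+p)))^2 / 8
     \<le> (exp (-q) - exp (-p)) * (exp (-q)/(1+q) - exp (-p)/(1+p))"
      using main h by blast
    then show ?thesis
      using neg[of "exp (-p) - exp (-q)" "exp (-p)/(1+p) - exp (-q)/(1+q)"] by simp
  qed
qed



primrec yit :: "'a set \<Rightarrow> ('a \<Rightarrow> 'a \<Rightarrow> bool) \<Rightarrow> real \<Rightarrow> ('a \<Rightarrow> real) \<Rightarrow> nat \<Rightarrow> 'a \<Rightarrow> real" where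
  "yit V E a c 0 = (\<lambda>u. 0)"
| "yit V E a c (Suc n) = (\<lambda>u. c u * (1 - a * (\<Sum>v\<in>V. adj E u v * yit V E a c n v)))"

lemma adj_nonneg: "0 \<le> adj E u v" and adj_le1: "adj E u v \<le> 1"
  by (auto simp: adj_def)

lemma fixpt:
  assumes fin: "finite V" and c: "\<forall>u\<in>V. 0 \<le> c u \<and> c u \<le> 1" and a0: "0 \<le> a"
    and deg: "\<forall>u\<in>V. a * (\<Sum>v\<in>V. adj E u v) \<le> 1/4"
  shows "\<exists>Y. \<forall>u\<in>V. 0 \<le> Y u \<and> Y u \<le> 1 \<and> Y u = c u * (1 - a * (\<Sum>v\<in>V. adj E u v * Y v))"
proof -
  define y where "y = yit V E a c"
  have ys: "y (Suc n) u = c u * (1 - a * (\<Sum>v\<in>V. adj E u v * y n v))" for n u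
    by (simp add: y_def)
  have step: "0 \<le> c u * (1 - a * (\<Sum>v\<in>V. adj E u v * f v)) \<and> c u * (1 - a * (\<Sum>v\<in>V. adj E u v * f v)) \<le> 1"
    if u: "u \<in> V" and f: "\<forall>v\<in>V. 0 \<le> f v \<and> f v \<le> 1" for u f
  proof -
    have s0: "0 \<le> (\<Sum>v\<in>V. adj E u v * f v)" using f by (intro sum_nonneg) (simp add: adj_nonneg)
    have s1: "(\<Sum>v\<in>V. adj E u v * f v) \<le> (\<Sum>v\<in>V. adj E u v)"
      using f by (intro sum_mono) (simp add: adj_nonneg mult_left_le)
    have "a * (\<Sum>v\<in>V. adj E u v * f v) \<le> a * (\<Sum>v\<in>V. adj E u v)"
      using s1 a0 by (rule mult_left_mono)
    then have t1: "a * (\<Sum>v\<in>V. adj E u v * f v) \<le> 1/4" using deg u by auto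
    have t0: "0 \<le> a * (\<Sum>v\<in>V. adj E u v * f v)" using a0 s0 by simp
    have "0 \<le> 1 - a * (\<Sum>v\<in>V. adj E u v * f v)" "1 - a * (\<Sum>v\<in>V. adj E u v * f v) \<le> 1"
      using t0 t1 by auto
    then show ?thesis using c u by (auto intro: mult_le_one)
  qed
  have bnd: "\<forall>u\<in>V. 0 \<le> y n u \<and> y n u \<le> 1" for n
  proof (induction n)
    case 0
    then show ?case by (simp add: y_def)
  next
    case (Suc n)
    then show ?case using step by (simp only: ys) blast
  qed
  have diff: "\<forall>u\<in>V. \<bar>y (Suc n) u - y n u\<bar> \<le> (1/4)^n" for n
  proof (induction n)
    case 0
    then show ?case using bnd[of 1] by (simp add: y_def)
  next
    case (Suc n)
    show ?case
    proof
      fix u assume u: "u \<in> V"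
      have "y (Suc (Suc n)) u - y (Suc n) u
          = - (c u * a) * (\<Sum>v\<in>V. adj E u v * (y (Suc n) v - y n v))"
      proof -
        have e1: "y (Suc (Suc n)) u = c u * (1 - a * (\<Sum>v\<in>V. adj E u v * y (Suc n) v))" by (rule ys)
        have e2: "y (Suc n) u = c u * (1 - a * (\<Sum>v\<in>V. adj E u v * y n v))" by (rule ys)
        have e3: "(\<Sum>v\<in>V. adj E u v * (y (Suc n) v - y n v)) = (\<Sum>v\<in>V. adj E u v * y (Suc n) v) - (\<Sum>v\<in>V. adj E u v * y n v)"
          by (simp add: right_diff_distrib sum_subtractf)
        show ?thesis unfolding e3 by (subst e1, subst e2) (simp add: algebra_simps)
      qed
      then have "\<bar>y (Suc (Suc n)) u - y (Suc n) u\<bar>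
          = (c u * a) * \<bar>\<Sum>v\<in>V. adj E u v * (y (Suc n) v - y n v)\<bar>"
        using c u a0 by (simp add: abs_mult)
      also have "\<dots> \<le> (c u * a) * (\<Sum>v\<in>V. adj E u v * (1/4)^n)"
      proof (rule mult_left_mono)
        have "\<bar>\<Sum>v\<in>V. adj E u v * (y (Suc n) v - y n v)\<bar> \<le> (\<Sum>v\<in>V. \<bar>adj E u v * (y (Suc n) v - y n v)\<bar>)"
          by (rule sum_abs)
        also have "\<dots> \<le> (\<Sum>v\<in>V. adj E u v * (1/4)^n)"
          using Suc.IH by (intro sum_mono) (simp add: abs_mult adj_nonneg mult_left_mono)
        finally show "\<bar>\<Sum>v\<in>V. adj E u v * (y (Suc n) v - y n v)\<bar> \<le> (\<Sum>v\<in>V. adj E u v * (1/4)^n)" .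
        show "0 \<le> c u * a" using c u a0 by simp
      qed
      also have "\<dots> = c u * (a * (\<Sum>v\<in>V. adj E u v)) * (1/4)^n"
        by (simp add: sum_distrib_right algebra_simps)
      also have "\<dots> \<le> 1 * (1/4) * (1/4)^n"
        using c u deg a0 by (intro mult_right_mono mult_mono) (auto intro!: mult_nonneg_nonneg sum_nonneg simp: adj_nonneg)
      also have "\<dots> = (1/4)^(Suc n)" by simp
      finally show "\<bar>y (Suc (Suc n)) u - y (Suc n) u\<bar> \<le> (1/4)^(Suc n)" .
    qed
  qed
  have conv: "convergent (\<lambda>n. y n u)" if u: "u \<in> V" for u
  proof -
    have sm: "summable (\<lambda>n. y (Suc n) u - y n u)"
      by (rule summable_comparison_test[of _ "\<lambda>n. (1/4::real)^n"])
         (use diff u in \<open>auto intro: summable_geometric\<close>)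
    have "(\<lambda>n. \<Sum>i<n. y (Suc i) u - y i u) \<longlonglongrightarrow> (\<Sum>i. y (Suc i) u - y i u)"
      using sm by (rule summable_LIMSEQ)
    moreover have "(\<lambda>n. \<Sum>i<n. y (Suc i) u - y i u) = (\<lambda>n. y n u)"
    proof
      fix n show "(\<Sum>i<n. y (Suc i) u - y i u) = y n u"
        using sum_lessThan_telescope[of "\<lambda>i. y i u" n] by (simp add: y_def)
    qed
    ultimately show ?thesis unfolding convergent_def by auto
  qed
  define Y where "Y u = lim (\<lambda>n. y n u)" for u
  have lim: "(\<lambda>n. y n u) \<longlonglongrightarrow> Y u" if "u \<in> V" for u
    using conv[OF that] by (simp add: Y_def convergent_LIMSEQ_iff)
  show ?thesis
  proof (intro exI ballI conjI)
    fix u assume u: "u \<in> V"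
    show "0 \<le> Y u" using lim[OF u] bnd by (intro LIMSEQ_le_const) (use u in auto)
    show "Y u \<le> 1" using lim[OF u] bnd by (intro LIMSEQ_le_const2) (use u in auto)
    have l1: "(\<lambda>n. y (Suc n) u) \<longlonglongrightarrow> Y u" using lim[OF u] by (rule LIMSEQ_Suc)
    have l2: "(\<lambda>n. y (Suc n) u) \<longlonglongrightarrow> c u * (1 - a * (\<Sum>v\<in>V. adj E u v * Y v))"
      unfolding ys by (intro tendsto_intros tendsto_sum lim) 
    show "Y u = c u * (1 - a * (\<Sum>v\<in>V. adj E u v * Y v))"
      using l1 l2 by (rule LIMSEQ_unique)
  qed
qed



lemma swap_adj:
  assumes sym: "\<forall>u v. adj E u v = adj E v u"
  shows "(\<Sum>u\<in>V. \<Sum>v\<in>V. adj E u v * F u v) = (\<Sum>u\<in>V. \<Sum>v\<in>V. adj E u v * F v u)"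
proof -
  have "(\<Sum>u\<in>V. \<Sum>v\<in>V. adj E u v * F u v) = (\<Sum>v\<in>V. \<Sum>u\<in>V. adj E u v * F u v)"
    by (rule sum.swap)
  also have "\<dots> = (\<Sum>u\<in>V. \<Sum>v\<in>V. adj E u v * F v u)"
    by (intro sum.cong refl) (metis sym)
  finally show ?thesis .
qed

lemma Gbound:
  fixes hu hv pu pv x y :: real
  assumes "(2*(pu - pv) - (hu - hv))^2/8 \<le> (pu - pv)*(hu - hv)"
  shows "(2*hu*(pu - pv) + x*y + x*(hv - hu + 2*pu - 2*pv) + (2*hv*(pv - pu) + y*x + y*(hu - hv + 2*pv - 2*pu)))/2
     \<ge> -(3/2)*(x^2 + y^2)"
proof -
  define A where "A = pu - pv"
  define B where "B = hu - hv"
  have id: "(2*hu*(pu - pv) + x*y + x*(hv - hu + 2*pu - 2*pv) + (2*hv*(pv - pu) + y*x + y*(hu - hv + 2*pv - 2*pu)))/2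
     + (3/2)*(x^2 + y^2) = (A*B - (2*A - B)^2/8) + (x - y + (2*A-B)/2)^2/2 + (x+y)^2"
    unfolding A_def B_def by (simp add: field_simps power2_eq_square)
  have "0 \<le> A*B - (2*A - B)^2/8" using assms by (simp add: A_def B_def)
  moreover have "0 \<le> (x - y + (2*A-B)/2)^2/2 + (x+y)^2" by simp
  ultimately show ?thesis using id by linarith
qed

lemma key:
  fixes w Y :: "'a \<Rightarrow> real"
  assumes fin: "finite V"
    and sym: "\<forall>u v. adj E u v = adj E v u"
    and a0: "0 \<le> a"
    and wb: "\<forall>u\<in>V. 0 \<le> w u \<and> w u \<le> 1/4"
    and wd: "\<forall>u\<in>V. w u = a * (\<Sum>v\<in>V. adj E u v) * exp (- w u)"
    and d3: "\<forall>u\<in>V. 3 * a * (\<Sum>v\<in>V. adj E u v) \<le> 1"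
    and Yeq: "\<forall>u\<in>V. exp (w u) * Y u + a * (\<Sum>v\<in>V. adj E u v * Y v) = 1"
  shows "(\<Sum>u\<in>V. exp (- w u)) \<le> (\<Sum>u\<in>V. Y u * (1 + w u))"
proof -
  define dg where "dg u = (\<Sum>v\<in>V. adj E u v)" for u
  define \<rho> where "\<rho> u = exp (- w u)" for u
  define h where "h u = \<rho> u / (1 + w u)" for u
  define \<delta> where "\<delta> u = Y u - h u" for u
  define r where "r u = w u - a * (\<Sum>v\<in>V. adj E u v * \<rho> v)" for u
  define Ek where "Ek u v = h v - h u + 2 * \<rho> u - 2 * \<rho> v" for u v
  define F where "F u v = 2 * h u * (\<rho> u - \<rho> v) + \<delta> u * \<delta> v + \<delta> u * Ek u v" for u v
  have wd': "w u = a * dg u * \<rho> u" if "u \<in> V" for u using wd that by (simp add: dg_def \<rho>_def)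
  have Yeq': "exp (w u) * Y u + a * (\<Sum>v\<in>V. adj E u v * Y v) = 1" if "u \<in> V" for u
    using Yeq that by blast
  have s1a: "(\<Sum>u\<in>V. \<rho> u) = (\<Sum>u\<in>V. Y u + a * (\<rho> u * (\<Sum>v\<in>V. adj E u v * Y v)))"
  proof (rule sum.cong)
    fix u assume u: "u \<in> V"
    have "\<rho> u = \<rho> u * (exp (w u) * Y u + a * (\<Sum>v\<in>V. adj E u v * Y v))" using Yeq'[OF u] by simp
    also have "\<dots> = Y u + a * (\<rho> u * (\<Sum>v\<in>V. adj E u v * Y v))"
    proof -
      have "\<rho> u * exp (w u) = 1" by (simp add: \<rho>_def flip: exp_add)
      then show ?thesis by (simp add: distrib_left mult.assoc[symmetric])
    qed
    finally show "\<rho> u = Y u + a * (\<rho> u * (\<Sum>v\<in>V. adj E u v * Y v))" .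
  qed simp
  have s1b: "(\<Sum>u\<in>V. \<rho> u * (\<Sum>v\<in>V. adj E u v * Y v)) = (\<Sum>u\<in>V. Y u * (\<Sum>v\<in>V. adj E u v * \<rho> v))"
  proof -
    have "(\<Sum>u\<in>V. \<rho> u * (\<Sum>v\<in>V. adj E u v * Y v)) = (\<Sum>u\<in>V. \<Sum>v\<in>V. adj E u v * (\<rho> u * Y v))"
      by (simp add: sum_distrib_left algebra_simps)
    also have "\<dots> = (\<Sum>u\<in>V. \<Sum>v\<in>V. adj E u v * (\<rho> v * Y u))"
      by (rule swap_adj[OF sym])
    also have "\<dots> = (\<Sum>u\<in>V. Y u * (\<Sum>v\<in>V. adj E u v * \<rho> v))"
      by (simp add: sum_distrib_left algebra_simps)
    finally show ?thesis .
  qed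
  have R_eq: "(\<Sum>u\<in>V. Y u * (1 + w u)) - (\<Sum>u\<in>V. \<rho> u) = (\<Sum>u\<in>V. Y u * r u)"
  proof -
    have eq1: "(\<Sum>u\<in>V. Y u + a * (\<rho> u * (\<Sum>v\<in>V. adj E u v * Y v)))
        = (\<Sum>u\<in>V. Y u) + a * (\<Sum>u\<in>V. \<rho> u * (\<Sum>v\<in>V. adj E u v * Y v))"
      by (simp only: sum.distrib sum_distrib_left)
    have "(\<Sum>u\<in>V. \<rho> u) = (\<Sum>u\<in>V. Y u) + a * (\<Sum>u\<in>V. \<rho> u * (\<Sum>v\<in>V. adj E u v * Y v))"
      using s1a eq1 by (rule trans)
    also have "\<dots> = (\<Sum>u\<in>V. Y u) + a * (\<Sum>u\<in>V. Y u * (\<Sum>v\<in>V. adj E u v * \<rho> v))"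
      by (simp only: s1b)
    finally have e1: "(\<Sum>u\<in>V. \<rho> u) = (\<Sum>u\<in>V. Y u) + a * (\<Sum>u\<in>V. Y u * (\<Sum>v\<in>V. adj E u v * \<rho> v))" .
    have e2: "(\<Sum>u\<in>V. Y u * r u) = (\<Sum>u\<in>V. Y u * w u) - a * (\<Sum>u\<in>V. Y u * (\<Sum>v\<in>V. adj E u v * \<rho> v))"
    proof -
      have "(\<Sum>u\<in>V. Y u * r u) = (\<Sum>u\<in>V. Y u * w u - a * (Y u * (\<Sum>v\<in>V. adj E u v * \<rho> v)))"
        by (intro sum.cong refl) (simp add: r_def right_diff_distrib mult.left_commute)
      also have "\<dots> = (\<Sum>u\<in>V. Y u * w u) - a * (\<Sum>u\<in>V. Y u * (\<Sum>v\<in>V. adj E u v * \<rho> v))"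
        by (simp only: sum_subtractf sum_distrib_left)
      finally show ?thesis .
    qed
    have e3: "(\<Sum>u\<in>V. Y u * (1 + w u)) = (\<Sum>u\<in>V. Y u) + (\<Sum>u\<in>V. Y u * w u)"
      by (simp add: distrib_left sum.distrib)
    show ?thesis using e1 e2 e3 by linarith
  qed
  have step2: "2 * r u = exp (w u) * \<delta> u + a * (\<Sum>v\<in>V. adj E u v * \<delta> v) + a * (\<Sum>v\<in>V. adj E u v * Ek u v)"
    if u: "u \<in> V" for u
  proof -
    have nd: "(\<Sum>v\<in>V. adj E u v * \<delta> v) = (\<Sum>v\<in>V. adj E u v * Y v) - (\<Sum>v\<in>V. adj E u v * h v)"
      by (simp add: \<delta>_def right_diff_distrib sum_subtractf)
    have ne: "(\<Sum>v\<in>V. adj E u v * Ek u v) = (\<Sum>v\<in>V. adj E u v * h v) - dg u * h u + 2 * (dg u * \<rho> u) - 2 * (\<Sum>v\<in>V. adj E u v * \<rho> v)"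
    proof -
      have "(\<Sum>v\<in>V. adj E u v * Ek u v) = (\<Sum>v\<in>V. adj E u v * h v - adj E u v * h u + 2 * (adj E u v * \<rho> u) - 2 * (adj E u v * \<rho> v))"
        by (intro sum.cong refl) (simp add: Ek_def algebra_simps)
      also have "\<dots> = (\<Sum>v\<in>V. adj E u v * h v) - dg u * h u + 2 * (dg u * \<rho> u) - 2 * (\<Sum>v\<in>V. adj E u v * \<rho> v)"
        by (simp only: sum.distrib sum_subtractf sum_distrib_left[symmetric] sum_distrib_right[symmetric] dg_def)
      finally show ?thesis .
    qed
    have w0: "0 \<le> w u" using wb u by auto
    have f1: "exp (w u) * h u = 1/(1 + w u)"
    proof -
      have "exp (w u) * \<rho> u = 1" by (simp add: \<rho>_def flip: exp_add)
      then show ?thesis by (simp add: h_def)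
    qed
    have f4: "a * (dg u * \<rho> u) = w u" using wd'[OF u] by (simp add: mult.assoc)
    have f2: "a * (dg u * h u) = w u/(1 + w u)"
      using f4 by (simp add: h_def)
    have f3: "1 - 1/(1+w u) - w u/(1+w u) = 0" using w0 by (simp add: field_simps)
    have "exp (w u) * \<delta> u + a * (\<Sum>v\<in>V. adj E u v * \<delta> v) + a * (\<Sum>v\<in>V. adj E u v * Ek u v)
       = (exp (w u) * Y u + a * (\<Sum>v\<in>V. adj E u v * Y v)) - exp (w u) * h u - a * (dg u * h u)
          + 2 * (a * (dg u * \<rho> u)) - 2 * (a * (\<Sum>v\<in>V. adj E u v * \<rho> v))"
      unfolding nd ne by (simp add: \<delta>_def algebra_simps)
    also have "\<dots> = 1 - 1/(1 + w u) - w u/(1 + w u) + 2 * w u - 2 * (a * (\<Sum>v\<in>V. adj E u v * \<rho> v))"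
      using Yeq'[OF u] f1 f2 f4 by simp
    also have "\<dots> = 2 * r u" using f3 by (simp add: r_def)
    finally show ?thesis by simp
  qed
  have step3: "2 * (Y u * r u) = exp (w u) * (\<delta> u)^2 + a * (\<Sum>v\<in>V. adj E u v * F u v)"
    if u: "u \<in> V" for u
  proof -
    have rr: "r u = a * (\<Sum>v\<in>V. adj E u v * (\<rho> u - \<rho> v))"
    proof -
      have "(\<Sum>v\<in>V. adj E u v * (\<rho> u - \<rho> v)) = dg u * \<rho> u - (\<Sum>v\<in>V. adj E u v * \<rho> v)"
        by (simp add: right_diff_distrib sum_subtractf dg_def sum_distrib_right)
      then show ?thesis using wd'[OF u] by (simp add: r_def right_diff_distrib)
    qed
    have sF: "(\<Sum>v\<in>V. adj E u v * F u v) = 2 * h u * (\<Sum>v\<in>V. adj E u v * (\<rho> u - \<rho> v))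
        + \<delta> u * (\<Sum>v\<in>V. adj E u v * \<delta> v) + \<delta> u * (\<Sum>v\<in>V. adj E u v * Ek u v)"
    proof -
      have "(\<Sum>v\<in>V. adj E u v * F u v) = (\<Sum>v\<in>V. 2 * h u * (adj E u v * (\<rho> u - \<rho> v))
        + \<delta> u * (adj E u v * \<delta> v) + \<delta> u * (adj E u v * Ek u v))"
        by (intro sum.cong refl) (simp add: F_def algebra_simps)
      also have "\<dots> = 2 * h u * (\<Sum>v\<in>V. adj E u v * (\<rho> u - \<rho> v))
        + \<delta> u * (\<Sum>v\<in>V. adj E u v * \<delta> v) + \<delta> u * (\<Sum>v\<in>V. adj E u v * Ek u v)"
        by (simp only: sum.distrib sum_distrib_left[symmetric])
      finally show ?thesis .
    qed
    have Yh: "Y u = h u + \<delta> u" by (simp add: \<delta>_def)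
    have "2 * (Y u * r u) = 2 * h u * r u + \<delta> u * (2 * r u)" unfolding Yh by (simp add: algebra_simps)
    also have "\<dots> = exp (w u) * (\<delta> u)^2 + a * (\<Sum>v\<in>V. adj E u v * F u v)"
      unfolding step2[OF u] sF by (subst rr) (simp add: algebra_simps power2_eq_square)
    finally show ?thesis .
  qed
  have sum3: "2 * (\<Sum>u\<in>V. Y u * r u) = (\<Sum>u\<in>V. exp (w u) * (\<delta> u)^2) + a * (\<Sum>u\<in>V. \<Sum>v\<in>V. adj E u v * F u v)"
  proof -
    have "2 * (\<Sum>u\<in>V. Y u * r u) = (\<Sum>u\<in>V. 2 * (Y u * r u))" by (simp add: sum_distrib_left)
    also have "\<dots> = (\<Sum>u\<in>V. exp (w u) * (\<delta> u)^2 + a * (\<Sum>v\<in>V. adj E u v * F u v))"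
      by (intro sum.cong refl step3)
    also have "\<dots> = (\<Sum>u\<in>V. exp (w u) * (\<delta> u)^2) + a * (\<Sum>u\<in>V. \<Sum>v\<in>V. adj E u v * F u v)"
      by (simp only: sum.distrib sum_distrib_left)
    finally show ?thesis .
  qed
  have symF: "(\<Sum>u\<in>V. \<Sum>v\<in>V. adj E u v * F u v) = (\<Sum>u\<in>V. \<Sum>v\<in>V. adj E u v * ((F u v + F v u)/2))"
  proof -
    have sw: "(\<Sum>u\<in>V. \<Sum>v\<in>V. adj E u v * F u v) = (\<Sum>u\<in>V. \<Sum>v\<in>V. adj E u v * F v u)"
      by (rule swap_adj[OF sym])
    have "(\<Sum>u\<in>V. \<Sum>v\<in>V. adj E u v * ((F u v + F v u)/2))
        = ((\<Sum>u\<in>V. \<Sum>v\<in>V. adj E u v * F u v) + (\<Sum>u\<in>V. \<Sum>v\<in>V. adj E u v * F v u))/2"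
      by (simp add: distrib_left sum.distrib sum_divide_distrib add_divide_distrib)
    then show ?thesis using sw by simp
  qed
  have lowF: "(\<Sum>u\<in>V. \<Sum>v\<in>V. adj E u v * ((F u v + F v u)/2))
      \<ge> (\<Sum>u\<in>V. \<Sum>v\<in>V. adj E u v * (-(3/2)*((\<delta> u)^2 + (\<delta> v)^2)))"
  proof (intro sum_mono mult_left_mono)
    fix u v assume u: "u \<in> V" and v: "v \<in> V"
    show "0 \<le> adj E u v" by (rule adj_nonneg)
    have pi: "(2*(\<rho> u - \<rho> v) - (h u - h v))^2/8 \<le> (\<rho> u - \<rho> v)*(h u - h v)"
      using pair_ineq[of "w u" "w v"] wb u v by (simp add: \<rho>_def h_def)
    show "-(3/2)*((\<delta> u)^2 + (\<delta> v)^2) \<le> (F u v + F v u)/2"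
      using Gbound[OF pi, of "\<delta> u" "\<delta> v"] by (simp add: F_def Ek_def)
  qed
  have sq: "(\<Sum>u\<in>V. \<Sum>v\<in>V. adj E u v * (-(3/2)*((\<delta> u)^2 + (\<delta> v)^2)))
      = -3 * (\<Sum>u\<in>V. dg u * (\<delta> u)^2)"
  proof -
    have sw: "(\<Sum>u\<in>V. \<Sum>v\<in>V. adj E u v * (\<delta> v)^2) = (\<Sum>u\<in>V. \<Sum>v\<in>V. adj E u v * (\<delta> u)^2)"
      by (rule swap_adj[OF sym])
    have d: "(\<Sum>u\<in>V. \<Sum>v\<in>V. adj E u v * (\<delta> u)^2) = (\<Sum>u\<in>V. dg u * (\<delta> u)^2)"
      by (simp add: dg_def sum_distrib_right)
    have "(\<Sum>u\<in>V. \<Sum>v\<in>V. adj E u v * (-(3/2)*((\<delta> u)^2 + (\<delta> v)^2)))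
       = (\<Sum>u\<in>V. \<Sum>v\<in>V. (-(3/2)) * (adj E u v * (\<delta> u)^2) + (-(3/2)) * (adj E u v * (\<delta> v)^2))"
      by (intro sum.cong refl) (simp add: algebra_simps)
    also have "\<dots> = (-(3/2)) * (\<Sum>u\<in>V. \<Sum>v\<in>V. adj E u v * (\<delta> u)^2) + (-(3/2)) * (\<Sum>u\<in>V. \<Sum>v\<in>V. adj E u v * (\<delta> v)^2)"
      by (simp only: sum.distrib sum_distrib_left[symmetric])
    finally have "(\<Sum>u\<in>V. \<Sum>v\<in>V. adj E u v * (-(3/2)*((\<delta> u)^2 + (\<delta> v)^2)))
       = (-(3/2)) * (\<Sum>u\<in>V. \<Sum>v\<in>V. adj E u v * (\<delta> u)^2) + (-(3/2)) * (\<Sum>u\<in>V. \<Sum>v\<in>V. adj E u v * (\<delta> v)^2)" .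
    then show ?thesis using sw d by simp
  qed
  have fin_ineq: "0 \<le> (\<Sum>u\<in>V. exp (w u) * (\<delta> u)^2) - 3 * a * (\<Sum>u\<in>V. dg u * (\<delta> u)^2)"
  proof -
    have "(\<Sum>u\<in>V. exp (w u) * (\<delta> u)^2) - 3 * a * (\<Sum>u\<in>V. dg u * (\<delta> u)^2)
        = (\<Sum>u\<in>V. (exp (w u) - 3 * a * dg u) * (\<delta> u)^2)"
      by (simp add: sum_subtractf sum_distrib_left left_diff_distrib mult.assoc)
    also have "\<dots> \<ge> 0"
    proof (intro sum_nonneg mult_nonneg_nonneg)
      fix u assume u: "u \<in> V"
      have "1 \<le> exp (w u)" using wb u by simp
      moreover have "3 * a * dg u \<le> 1" using d3 u by (simp add: dg_def)
      ultimately show "0 \<le> exp (w u) - 3 * a * dg u" by linarith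
    qed simp
    finally show ?thesis .
  qed
  have "0 \<le> 2 * (\<Sum>u\<in>V. Y u * r u)"
  proof -
    have "a * (\<Sum>u\<in>V. \<Sum>v\<in>V. adj E u v * F u v) \<ge> a * (-3 * (\<Sum>u\<in>V. dg u * (\<delta> u)^2))"
      using lowF sq symF a0 by (intro mult_left_mono) auto
    then show ?thesis using sum3 fin_ineq by linarith
  qed
  then show ?thesis using R_eq by (simp add: \<rho>_def)
qed

lemma adj_sum_degree:
  assumes "finite V"
  shows "(\<Sum>v\<in>V. adj E u v) = real (degree V E u)"
proof -
  have "V \<inter> Collect (E u) = {v\<in>V. E u v}" by auto
  then show ?thesis using assms by (simp add: adj_def degree_def sum.If_cases)
qed

theorem mainTheorem8:
  fixes V :: "'a set" and E :: "'a \<Rightarrow> 'a \<Rightarrow> bool"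
    and b lam :: real and x :: "'a \<Rightarrow> real"
  assumes G: "simple_graph V E"
    and no_isolated: "\<forall>u\<in>V. degree V E u \<ge> 1"
    and b: "b = 0 \<or> b \<ge> 1"
    and lam_pos: "0 < lam"
    and lam_lt: "lam < cconst b / real (max_degree V E)"
    and x_nonneg: "\<forall>u\<in>V. x u \<ge> 0"
    and x_feas: "\<forall>u\<in>V. betaval b lam (degree V E u) * x u
        + gammaval b lam (degree V E u) * (\<Sum>v\<in>V. adj E u v * x v) \<ge> 1"
  shows "(\<Sum>u\<in>V. x u) \<ge> (\<Sum>u\<in>V. 1 / (betaval b lam (degree V E u)
            + real (degree V E u) * gammaval b lam (degree V E u)))"
proof (cases "V = {}")
  case True
  then show ?thesis by simp
next
  case Vne: False
  have fin: "finite V" using G by (simp add: simple_graph_def)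
  have symE: "\<forall>u v. E u v \<longrightarrow> E v u" using G by (simp add: simple_graph_def)
  have sym: "\<forall>u v. adj E u v = adj E v u" using symE by (auto simp: adj_def)
  define \<Delta> where "\<Delta> = max_degree V E"
  have degle: "degree V E u \<le> \<Delta>" if "u \<in> V" for u
    unfolding \<Delta>_def max_degree_def using fin that by (intro Max_ge) auto
  obtain u0 where u0: "u0 \<in> V" using Vne by blast
  have D1: "1 \<le> \<Delta>" using degle[OF u0] no_isolated u0 by force
  have D1r: "1 \<le> real \<Delta>" using D1 by simp
  define a where "a = (1 + lam) powr b * ln (1 + lam)"
  have ln_le: "ln (1 + lam) \<le> lam" using lam_pos by (intro ln_add_one_self_le_self) simp
  have ln_pos: "0 < ln (1 + lam)" using lam_pos by simp
  have a_pos: "0 < a" unfolding a_def using ln_pos lam_pos by simp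
  have laml: "lam * real \<Delta> < cconst b" using lam_lt D1r by (simp add: \<Delta>_def pos_less_divide_eq)
  have aD: "a * real \<Delta> \<le> 1/4"
    using b
  proof
    assume b0: "b = 0"
    have "a = ln (1 + lam)" unfolding a_def b0 using lam_pos by simp
    then have "a * real \<Delta> \<le> lam * real \<Delta>" using ln_le D1r by (simp add: mult_right_mono)
    also have "\<dots> \<le> 1/4" using laml b0 by (simp add: cconst_def)
    finally show ?thesis .
  next
    assume b1: "1 \<le> b"
    have lamb: "b * (lam * real \<Delta>) < 0.0896883" using laml b1 by (simp add: cconst_def pos_less_divide_eq mult_ac)
    have blam: "b * lam \<le> b * (lam * real \<Delta>)" using b1 lam_pos D1r by (simp add: mult_left_mono)
    have "(1 + lam) powr b = exp (b * ln (1 + lam))" using lam_pos by (simp add: powr_def)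
    also have "\<dots> \<le> exp (b * lam)" using ln_le b1 by (simp add: mult_left_mono)
    also have "\<dots> \<le> 1 + 2 * (b * lam)"
    proof (rule real_exp_bound_lemma)
      show "0 \<le> b * lam" using b1 lam_pos by simp
      have "(0.0896883::real) \<le> 1/2" by simp
      then show "b * lam \<le> 1/2" using blam lamb by linarith
    qed
    finally have pw: "(1 + lam) powr b \<le> 1 + 2 * (b * lam)" .
    have "a * real \<Delta> = (1 + lam) powr b * (ln (1 + lam) * real \<Delta>)" by (simp add: a_def)
    also have "\<dots> \<le> (1 + 2 * (b * lam)) * (lam * real \<Delta>)"
      using pw ln_le D1r ln_pos b1 lam_pos by (intro mult_mono mult_right_mono) auto
    also have "\<dots> \<le> 2 * (lam * real \<Delta>)"
    proof (rule mult_right_mono)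
      have "(0.0896883::real) \<le> 1/2" by simp
      then show "1 + 2 * (b * lam) \<le> 2" using blam lamb by linarith
      show "0 \<le> lam * real \<Delta>" using lam_pos by simp
    qed
    also have "\<dots> \<le> 2 * (b * (lam * real \<Delta>))"
    proof -
      have "1 * (lam * real \<Delta>) \<le> b * (lam * real \<Delta>)"
        by (rule mult_right_mono) (use b1 lam_pos in auto)
      then show ?thesis by simp
    qed
    also have "\<dots> \<le> 1/4" using lamb by simp
    finally show ?thesis .
  qed
  define dg where "dg u = real (degree V E u)" for u
  have dgs: "(\<Sum>v\<in>V. adj E u v) = dg u" for u using adj_sum_degree[OF fin] by (simp add: dg_def)
  have adg: "a * dg u \<le> 1/4" if "u \<in> V" for u
  proof -
    have "a * dg u \<le> a * real \<Delta>" using degle[OF that] a_pos by (simp add: dg_def)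
    then show ?thesis using aD by linarith
  qed
  have dg1: "1 \<le> dg u" if "u \<in> V" for u using no_isolated that by (simp add: dg_def)
  define w where "w u = lambertW (Dval b lam (degree V E u))" for u
  have Dv: "Dval b lam (degree V E u) = dg u * a" for u by (simp add: Dval_def dg_def a_def mult.assoc)
  have wprop: "0 < w u \<and> w u * exp (w u) = dg u * a" if "u \<in> V" for u
  proof -
    have "0 < dg u * a" using dg1[OF that] a_pos by simp
    then show ?thesis using lambertW_props[of "dg u * a"] by (simp add: w_def Dv)
  qed
  have wle: "w u \<le> 1/4" if "u \<in> V" for u
  proof -
    have wp: "0 < w u" and we: "w u * exp (w u) = dg u * a" using wprop[OF that] by auto
    have "w u * 1 \<le> w u * exp (w u)" using wp by (intro mult_left_mono) auto
    then have "w u \<le> dg u * a" using we by simp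
    then show ?thesis using adg[OF that] by (simp add: mult.commute)
  qed
  have wd: "w u = a * dg u * exp (- w u)" if "u \<in> V" for u
  proof -
    have "w u = w u * exp (w u) * exp (- w u)" by (simp add: mult.assoc flip: exp_add)
    then show ?thesis using wprop[OF that] by (simp add: mult.commute)
  qed
  obtain Y where Y: "\<forall>u\<in>V. 0 \<le> Y u \<and> Y u \<le> 1 \<and> Y u = exp (- w u) * (1 - a * (\<Sum>v\<in>V. adj E u v * Y v))"
  proof -
    have h1: "\<forall>u\<in>V. 0 \<le> exp (- w u) \<and> exp (- w u) \<le> 1"
      using wprop by (auto intro: less_imp_le)
    have h2: "\<forall>u\<in>V. a * (\<Sum>v\<in>V. adj E u v) \<le> 1/4" using adg dgs by simp
    show ?thesis using fixpt[OF fin h1 _ h2] a_pos that by auto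
  qed
  have Yeq: "\<forall>u\<in>V. exp (w u) * Y u + a * (\<Sum>v\<in>V. adj E u v * Y v) = 1"
  proof
    fix u assume u: "u \<in> V"
    have "exp (w u) * Y u = exp (w u) * exp (- w u) * (1 - a * (\<Sum>v\<in>V. adj E u v * Y v))"
      using Y u by (metis mult.assoc)
    also have "\<dots> = 1 - a * (\<Sum>v\<in>V. adj E u v * Y v)" by (simp flip: exp_add)
    finally show "exp (w u) * Y u + a * (\<Sum>v\<in>V. adj E u v * Y v) = 1" by simp
  qed
  have keyres: "(\<Sum>u\<in>V. exp (- w u)) \<le> (\<Sum>u\<in>V. Y u * (1 + w u))"
  proof (rule key[OF fin sym])
    show "0 \<le> a" using a_pos by simp
    show "\<forall>u\<in>V. 0 \<le> w u \<and> w u \<le> 1/4" using wprop wle by (auto intro: less_imp_le)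
    show "\<forall>u\<in>V. w u = a * (\<Sum>v\<in>V. adj E u v) * exp (- w u)" using wd dgs by simp
    show "\<forall>u\<in>V. 3 * a * (\<Sum>v\<in>V. adj E u v) \<le> 1" using adg dgs by fastforce
    show "\<forall>u\<in>V. exp (w u) * Y u + a * (\<Sum>v\<in>V. adj E u v * Y v) = 1" by (rule Yeq)
  qed
  define k where "k = (1 + lam) / lam"
  have k_pos: "0 < k" using lam_pos by (simp add: k_def)
  have beta_eq: "betaval b lam (degree V E u) = k * exp (w u) / (1 + w u)" if "u \<in> V" for u
  proof -
    have wp: "0 < w u" and we: "w u * exp (w u) = dg u * a" using wprop[OF that] by auto
    have "Dval b lam (degree V E u) / (w u * (1 + w u)) = exp (w u) / (1 + w u)"
      using wp by (simp add: Dv flip: we)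
    then show ?thesis by (simp add: betaval_def k_def flip: w_def)
  qed
  have gamma_eq: "gammaval b lam (degree V E u) = k * a / (1 + w u)" if "u \<in> V" for u
  proof -
    have wp: "0 < w u" using wprop[OF that] by auto
    have "Dval b lam (degree V E u) / (dg u * (1 + w u)) = a / (1 + w u)"
    proof -
      have "dg u \<noteq> 0" using dg1[OF that] by simp
      then show ?thesis by (simp add: Dv)
    qed
    then show ?thesis by (simp add: gammaval_def k_def dg_def flip: w_def)
  qed
  have rhs_eq: "1 / (betaval b lam (degree V E u) + real (degree V E u) * gammaval b lam (degree V E u))
      = exp (- w u) / k" if "u \<in> V" for u
  proof -
    have wp: "0 < w u" and we: "w u * exp (w u) = dg u * a" using wprop[OF that] by auto
    have "betaval b lam (degree V E u) + real (degree V E u) * gammaval b lam (degree V E u)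
        = (k * exp (w u) + real (degree V E u) * (k * a)) / (1 + w u)"
      by (simp add: beta_eq[OF that] gamma_eq[OF that] add_divide_distrib)
    also have "\<dots> = k * (exp (w u) + dg u * a) / (1 + w u)"
      by (simp add: dg_def algebra_simps)
    also have "\<dots> = k * exp (w u)" using wp by (simp flip: we) (simp add: field_simps)
    finally show ?thesis using k_pos by (simp add: exp_minus field_simps)
  qed
  have wdual: "(\<Sum>u\<in>V. Y u * (1 + w u) / k) \<le> (\<Sum>u\<in>V. x u)"
  proof -
    have "(\<Sum>u\<in>V. Y u * (1 + w u) / k)
        \<le> (\<Sum>u\<in>V. Y u * (exp (w u) * x u + a * (\<Sum>v\<in>V. adj E u v * x v)))"
    proof (rule sum_mono)
      fix u assume u: "u \<in> V"
      have wp: "0 < w u" using wprop[OF u] by auto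
      have Y0: "0 \<le> Y u" using Y u by blast
      have z0: "0 \<le> Y u * (1 + w u) / k" using Y0 wp k_pos by simp
      have "Y u * (1 + w u) / k * 1 \<le> Y u * (1 + w u) / k *
          (betaval b lam (degree V E u) * x u + gammaval b lam (degree V E u) * (\<Sum>v\<in>V. adj E u v * x v))"
        using x_feas u z0 by (intro mult_left_mono) auto
      also have "\<dots> = Y u * (exp (w u) * x u + a * (\<Sum>v\<in>V. adj E u v * x v))"
      proof -
        have aux: "Y*c/k*((k*e/c)*xx + (k*a/c)*S) = Y*(e*xx + a*S)" if "0 < c" "0 < k"
          for Y c k e xx S :: real using that by (simp add: field_simps)
        show ?thesis unfolding beta_eq[OF u] gamma_eq[OF u]
          by (rule aux) (use wp k_pos in auto)
      qed
      finally show "Y u * (1 + w u) / k \<le> Y u * (exp (w u) * x u + a * (\<Sum>v\<in>V. adj E u v * x v))" by simp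
    qed
    also have "\<dots> = (\<Sum>u\<in>V. x u * (exp (w u) * Y u + a * (\<Sum>v\<in>V. adj E u v * Y v)))"
    proof -
      have s1: "(\<Sum>u\<in>V. Y u * (\<Sum>v\<in>V. adj E u v * x v)) = (\<Sum>u\<in>V. x u * (\<Sum>v\<in>V. adj E u v * Y v))"
      proof -
        have "(\<Sum>u\<in>V. Y u * (\<Sum>v\<in>V. adj E u v * x v)) = (\<Sum>u\<in>V. \<Sum>v\<in>V. adj E u v * (Y u * x v))"
          by (simp add: sum_distrib_left algebra_simps)
        also have "\<dots> = (\<Sum>u\<in>V. \<Sum>v\<in>V. adj E u v * (Y v * x u))"
          by (rule swap_adj[OF sym])
        also have "\<dots> = (\<Sum>u\<in>V. x u * (\<Sum>v\<in>V. adj E u v * Y v))"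
          by (simp add: sum_distrib_left algebra_simps)
        finally show ?thesis .
      qed
      have "(\<Sum>u\<in>V. Y u * (exp (w u) * x u + a * (\<Sum>v\<in>V. adj E u v * x v)))
          = (\<Sum>u\<in>V. x u * (exp (w u) * Y u)) + a * (\<Sum>u\<in>V. Y u * (\<Sum>v\<in>V. adj E u v * x v))"
        by (simp add: distrib_left sum.distrib sum_distrib_left algebra_simps)
      also have "\<dots> = (\<Sum>u\<in>V. x u * (exp (w u) * Y u)) + a * (\<Sum>u\<in>V. x u * (\<Sum>v\<in>V. adj E u v * Y v))"
        by (simp only: s1)
      also have "\<dots> = (\<Sum>u\<in>V. x u * (exp (w u) * Y u + a * (\<Sum>v\<in>V. adj E u v * Y v)))"
        by (simp add: distrib_left sum.distrib sum_distrib_left algebra_simps)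
      finally show ?thesis .
    qed
    also have "\<dots> = (\<Sum>u\<in>V. x u)" using Yeq by simp
    finally show ?thesis .
  qed
  have "(\<Sum>u\<in>V. 1 / (betaval b lam (degree V E u) + real (degree V E u) * gammaval b lam (degree V E u)))
      = (\<Sum>u\<in>V. exp (- w u)) / k"
    using rhs_eq by (simp add: sum_divide_distrib)
  also have "\<dots> \<le> (\<Sum>u\<in>V. Y u * (1 + w u)) / k"
    using keyres k_pos by (simp add: divide_right_mono)
  also have "\<dots> = (\<Sum>u\<in>V. Y u * (1 + w u) / k)" by (simp add: sum_divide_distrib)
  also have "\<dots> \<le> (\<Sum>u\<in>V. x u)" by (rule wdual)
  finally show ?thesis .
qed

end
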